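(* Consider the system of delay differential equations \[ \begin{cases} x'(t)=s-dx(t)-kx(t)v(t),\\ y'(t)=k_{d}\int_{0}^{h_{1}}f_{1}(\tau)x(t-\tau)v(t-\tau)\,d\tau-\delta y(t)-py(t)z(t),\\ v'(t)=N_{d}\delta\int_{0}^{h_{2}}f_{2}(\tau)y(t-\tau)\,d\tau-\mu v(t),\\ z'(t)=qy(t)z(t)-bz(t), \end{cases} \] with initial conditions $x(\theta)=\varphi_{1}(\theta)$, $y(\theta)=\varphi_{2}(\theta)$, $v(\theta)=\varphi_{3}(\theta)$ for $\theta\in[-\overline{h},0]$ and $z(0)=z_{0}$, where $\varphi_{i}\in C([-\overline{h},0],\mathbb{R}_{+})$, $i=1,2,3$, and $z_{0}\geq0$. Then every solution is nonnegative for $t>0$. Moreover, every solution is positive for $t>\overline{h}$ if $z_{0}>0$ and either (i) $\varphi_{2}(0)+\int_{0}^{h_{1}}f_{1}(\tau)\varphi_{1}(-\tau)\varphi_{3}(-\tau)\,d\tau>0$, or (ii) $\varphi_{3}(0)+\int_{0}^{h_{2}}f_{2}(\tau)\varphi_{2}(-\tau)\,d\tau>0$. Furthermore, every solution is bounded above by some positive constant for sufficiently large $t$.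
   Context: All parameters $s,d,k,k_d,\delta,p,N_d,\mu,q,b$ are positive constants. $h_1,h_2>0$, $\overline{h}=\max\{h_1,h_2\}$, and $f_1:[0,h_1]\to\mathbb{R}_+$, $f_2:[0,h_2]\to\mathbb{R}_+$ are integrable functions with $\int_0^{h_1}f_1(\tau)d\tau=\int_0^{h_2}f_2(\tau)d\tau=1$. $C([-\overline{h},0],\mathbb{R}_+)$ denotes the continuous nonnegative functions on $[-\overline{h},0]$ with the sup-norm. *)

theory Defs
  imports "HOL-Analysis.Analysis"
begin

definition ddesol ::
  "real \<Rightarrow> real \<Rightarrow> real \<Rightarrow> real \<Rightarrow> real \<Rightarrow> real \<Rightarrow> real \<Rightarrow> real \<Rightarrow> real \<Rightarrow> real \<Rightarrow>
   real \<Rightarrow> real \<Rightarrow> (real \<Rightarrow> real) \<Rightarrow> (real \<Rightarrow> real) \<Rightarrow>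
   (real \<Rightarrow> real) \<Rightarrow> (real \<Rightarrow> real) \<Rightarrow> (real \<Rightarrow> real) \<Rightarrow> real \<Rightarrow>
   (real \<Rightarrow> real) \<Rightarrow> (real \<Rightarrow> real) \<Rightarrow> (real \<Rightarrow> real) \<Rightarrow> (real \<Rightarrow> real) \<Rightarrow> bool"
where
  "ddesol s d k kd \<delta> p Nd \<mu> q b h1 h2 f1 f2 \<phi>1 \<phi>2 \<phi>3 z0 x y v z \<longleftrightarrow>
    (let hb = max h1 h2 in
      continuous_on {-hb..} x \<and> continuous_on {-hb..} y \<and> continuous_on {-hb..} v \<and>
      continuous_on {0..} z \<and>
      (\<forall>\<theta>\<in>{-hb..0}. x \<theta> = \<phi>1 \<theta> \<and> y \<theta> = \<phi>2 \<theta> \<and> v \<theta> = \<phi>3 \<theta>) \<and>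
      z 0 = z0 \<and>
      (\<forall>t>0.
        (x has_real_derivative (s - d * x t - k * x t * v t)) (at t) \<and>
        (y has_real_derivative
           (kd * integral {0..h1} (\<lambda>\<tau>. f1 \<tau> * x (t - \<tau>) * v (t - \<tau>))
            - \<delta> * y t - p * y t * z t)) (at t) \<and>
        (v has_real_derivative
           (Nd * \<delta> * integral {0..h2} (\<lambda>\<tau>. f2 \<tau> * y (t - \<tau>)) - \<mu> * v t)) (at t) \<and>
        (z has_real_derivative (q * y t * z t - b * z t)) (at t)))"

end

theory Submission
  imports Defs
begin

lemma int_prod:
  fixes f g :: "real \<Rightarrow> real"
  assumes "f integrable_on {a..b}" "\<forall>\<tau>\<in>{a..b}. f \<tau> \<ge> 0" "continuous_on {a..b} g"
  shows "(\<lambda>\<tau>. f \<tau> * g \<tau>) integrable_on {a..b}"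
proof -
  have fa: "f absolutely_integrable_on {a..b}"
    using assms(1,2) nonnegative_absolutely_integrable_1 by blast
  have "(\<lambda>x. g x * f x) absolutely_integrable_on {a..b}"
    apply (rule absolutely_integrable_bounded_measurable_product_real[OF _ _ _ fa])
    using continuous_imp_measurable_on_sets_lebesgue[OF assms(3)] apply simp
     apply simp
    using compact_continuous_image[OF assms(3)] compact_imp_bounded by blast
  then show ?thesis by (simp add: absolutely_integrable_on_def mult.commute)
qed

lemma conv_int:
  fixes f g :: "real \<Rightarrow> real"
  assumes "f integrable_on {0..h}" "\<forall>\<tau>\<in>{0..h}. f \<tau> \<ge> 0" "continuous_on {t-h..t} g"
  shows "(\<lambda>\<tau>. f \<tau> * g (t - \<tau>)) integrable_on {0..h}"
proof (rule int_prod[OF assms(1,2)])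
  have "continuous_on {0..h} (\<lambda>\<tau>. t - \<tau>)" by (intro continuous_intros)
  moreover have "(\<lambda>\<tau>. t - \<tau>) ` {0..h} \<subseteq> {t-h..t}" by auto
  ultimately show "continuous_on {0..h} (\<lambda>\<tau>. g (t - \<tau>))"
    using continuous_on_compose2[OF assms(3)] by blast
qed

lemma conv_ge:
  fixes f g :: "real \<Rightarrow> real"
  assumes "f integrable_on {0..h}" "\<forall>\<tau>\<in>{0..h}. f \<tau> \<ge> 0" "integral {0..h} f = 1"
    "continuous_on {t-h..t} g" "\<forall>u\<in>{t-h..t}. g u \<ge> m"
  shows "integral {0..h} (\<lambda>\<tau>. f \<tau> * g (t - \<tau>)) \<ge> m"
proof -
  have "integral {0..h} (\<lambda>\<tau>. f \<tau> * m) \<le> integral {0..h} (\<lambda>\<tau>. f \<tau> * g (t - \<tau>))"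
    apply (rule integral_le)
    using int_prod[OF assms(1,2), of "\<lambda>_. m"] apply simp
    using conv_int[OF assms(1,2,4)] apply simp
    using assms(2,5) by (auto intro!: mult_left_mono)
  then show ?thesis using assms(3) by simp
qed

lemma conv_le:
  fixes f g :: "real \<Rightarrow> real"
  assumes "f integrable_on {0..h}" "\<forall>\<tau>\<in>{0..h}. f \<tau> \<ge> 0" "integral {0..h} f = 1"
    "continuous_on {t-h..t} g" "\<forall>u\<in>{t-h..t}. g u \<le> m"
  shows "integral {0..h} (\<lambda>\<tau>. f \<tau> * g (t - \<tau>)) \<le> m"
proof -
  have "integral {0..h} (\<lambda>\<tau>. f \<tau> * m) \<ge> integral {0..h} (\<lambda>\<tau>. f \<tau> * g (t - \<tau>))"
    apply (rule integral_le)
    using conv_int[OF assms(1,2,4)] apply simp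
    using int_prod[OF assms(1,2), of "\<lambda>_. m"] apply simp
    using assms(2,5) by (auto intro!: mult_left_mono)
  then show ?thesis using assms(3) by simp
qed

lemma conv_nonneg:
  fixes f g :: "real \<Rightarrow> real"
  assumes "f integrable_on {0..h}" "\<forall>\<tau>\<in>{0..h}. f \<tau> \<ge> 0"
    "continuous_on {t-h..t} g" "\<forall>u\<in>{t-h..t}. g u \<ge> 0"
  shows "integral {0..h} (\<lambda>\<tau>. f \<tau> * g (t - \<tau>)) \<ge> 0"
  apply (rule integral_nonneg[OF conv_int[OF assms(1-3)]])
  using assms(2,4) by auto

lemma conv_pos:
  fixes f g :: "real \<Rightarrow> real"
  assumes "f integrable_on {0..h}" "\<forall>\<tau>\<in>{0..h}. f \<tau> \<ge> 0" "integral {0..h} f = 1"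
    "continuous_on {t-h..t} g" "\<forall>u\<in>{t-h..t}. g u > 0" "0 \<le> h"
  shows "integral {0..h} (\<lambda>\<tau>. f \<tau> * g (t - \<tau>)) > 0"
proof -
  obtain u0 where u0: "u0 \<in> {t-h..t}" "\<forall>u\<in>{t-h..t}. g u0 \<le> g u"
    using continuous_attains_inf[OF compact_Icc _ assms(4)] assms(6) by auto
  have "integral {0..h} (\<lambda>\<tau>. f \<tau> * g (t - \<tau>)) \<ge> g u0"
    by (rule conv_ge[OF assms(1-4)]) (use u0 in auto)
  moreover have "g u0 > 0" using u0 assms(5) by auto
  ultimately show ?thesis by linarith
qed

lemma conv_cont0:
  fixes f g :: "real \<Rightarrow> real"
  assumes "f integrable_on {0..h}" "\<forall>\<tau>\<in>{0..h}. f \<tau> \<ge> 0" "integral {0..h} f = 1"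
    "continuous_on {a..b} g" "a \<le> -h" "0 < b"
    "integral {0..h} (\<lambda>\<tau>. f \<tau> * g (0 - \<tau>)) > 0"
  shows "\<exists>\<eta>>0. \<forall>t. 0 \<le> t \<and> t < \<eta> \<longrightarrow> integral {0..h} (\<lambda>\<tau>. f \<tau> * g (t - \<tau>)) > 0"
proof -
  define I0 where "I0 = integral {0..h} (\<lambda>\<tau>. f \<tau> * g (0 - \<tau>))"
  have "uniformly_continuous_on {a..b} g"
    by (rule compact_uniformly_continuous[OF assms(4) compact_Icc])
  then obtain d where d: "d > 0" "\<forall>x\<in>{a..b}. \<forall>x'\<in>{a..b}. dist x' x < d \<longrightarrow> dist (g x') (g x) < I0/2"
    unfolding uniformly_continuous_on_def using assms(7) I0_def
    by (metis half_gt_zero)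
  show ?thesis
  proof (intro exI[of _ "min d b"] conjI allI impI)
    show "min d b > 0" using d assms(6) by simp
    fix t assume t: "0 \<le> t \<and> t < min d b"
    have sub: "{t-h..t} \<subseteq> {a..b}" "{0-h..0} \<subseteq> {a..b}" using t assms(5,6) by auto
    have i1: "(\<lambda>\<tau>. f \<tau> * g (t - \<tau>)) integrable_on {0..h}"
      by (rule conv_int[OF assms(1,2)]) (rule continuous_on_subset[OF assms(4) sub(1)])
    have i0: "(\<lambda>\<tau>. f \<tau> * g (0 - \<tau>)) integrable_on {0..h}"
      by (rule conv_int[OF assms(1,2)]) (rule continuous_on_subset[OF assms(4) sub(2)])
    have i2: "(\<lambda>\<tau>. f \<tau> * (I0/2)) integrable_on {0..h}"
      using int_prod[OF assms(1,2), of "\<lambda>_. I0/2"] by simp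
    have "integral {0..h} (\<lambda>\<tau>. f \<tau> * g (0 - \<tau>) - f \<tau> * (I0/2)) \<le> integral {0..h} (\<lambda>\<tau>. f \<tau> * g (t - \<tau>))"
    proof (rule integral_le[OF integrable_diff[OF i0 i2] i1])
      fix \<tau> assume \<tau>: "\<tau> \<in> {0..h}"
      have "dist (g (t - \<tau>)) (g (0 - \<tau>)) < I0/2"
        using d(2) \<tau> t assms(5,6) by (auto simp: dist_real_def)
      then have "g (0 - \<tau>) - I0/2 \<le> g (t - \<tau>)" unfolding dist_real_def by (smt (verit))
      then show "f \<tau> * g (0 - \<tau>) - f \<tau> * (I0/2) \<le> f \<tau> * g (t - \<tau>)"
        using assms(2) \<tau> by (metis mult_left_mono right_diff_distrib)
    qed
    moreover have "integral {0..h} (\<lambda>\<tau>. f \<tau> * g (0 - \<tau>) - f \<tau> * (I0/2)) = I0 - I0/2"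
      using integral_diff[OF i0 i2] assms(3) I0_def by simp
    ultimately show "integral {0..h} (\<lambda>\<tau>. f \<tau> * g (t - \<tau>)) > 0"
      using assms(7) I0_def by linarith
  qed
qed

lemma lin_comp_F:
  fixes u c a :: "real \<Rightarrow> real"
  assumes "t0 \<le> t1" "continuous_on {t0..t1} u" "continuous_on {t0..t1} c"
    "\<forall>t\<in>{t0<..<t1}. (u has_real_derivative (a t - c t * u t)) (at t)"
  shows "continuous_on {t0..t1} (\<lambda>t. u t * exp (integral {t0..t} c))"
    "\<forall>t\<in>{t0<..<t1}. ((\<lambda>t. u t * exp (integral {t0..t} c)) has_real_derivative
         a t * exp (integral {t0..t} c)) (at t)"
proof -
  have ci: "continuous_on {t0..t1} (\<lambda>t. integral {t0..t} c)"
    by (rule indefinite_integral_continuous_1) (rule integrable_continuous_real[OF assms(3)])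
  show "continuous_on {t0..t1} (\<lambda>t. u t * exp (integral {t0..t} c))"
    by (intro continuous_intros assms(2) ci)
  show "\<forall>t\<in>{t0<..<t1}. ((\<lambda>t. u t * exp (integral {t0..t} c)) has_real_derivative
         a t * exp (integral {t0..t} c)) (at t)"
  proof
    fix t assume t: "t \<in> {t0<..<t1}"
    have "((\<lambda>x. integral {t0..x} c) has_real_derivative c t) (at t within {t0..t1})"
      using t by (intro integral_has_real_derivative assms(3)) auto
    moreover have "at t within {t0..t1} = at t"
      using t by (intro at_within_interior) auto
    ultimately have dC: "((\<lambda>x. integral {t0..x} c) has_real_derivative c t) (at t)" by simp
    have du: "(u has_real_derivative (a t - c t * u t)) (at t)" using assms(4) t by blast
    show "((\<lambda>t. u t * exp (integral {t0..t} c)) has_real_derivative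
         a t * exp (integral {t0..t} c)) (at t)"
      using du dC by (auto intro!: derivative_eq_intros simp: algebra_simps)
  qed
qed

lemma lin_comp:
  fixes u c a :: "real \<Rightarrow> real"
  assumes "t0 \<le> t1" "continuous_on {t0..t1} u" "continuous_on {t0..t1} c"
    "\<forall>t\<in>{t0<..<t1}. (u has_real_derivative (a t - c t * u t)) (at t)"
    "\<forall>t\<in>{t0<..<t1}. a t \<ge> 0"
  shows "u t1 * exp (integral {t0..t1} c) \<ge> u t0"
proof -
  note F = lin_comp_F[OF assms(1-4)]
  have "u t0 * exp (integral {t0..t0} c) \<le> u t1 * exp (integral {t0..t1} c)"
    apply (rule DERIV_nonneg_imp_increasing_open[OF assms(1) _ F(1)])
    using F(2) assms(5) by (metis greaterThanLessThan_iff exp_gt_zero less_eq_real_def mult_nonneg_nonneg)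
  then show ?thesis by simp
qed

lemma lin_comp_strict:
  fixes u c a :: "real \<Rightarrow> real"
  assumes "t0 < t1" "continuous_on {t0..t1} u" "continuous_on {t0..t1} c"
    "\<forall>t\<in>{t0<..<t1}. (u has_real_derivative (a t - c t * u t)) (at t)"
    "\<forall>t\<in>{t0<..<t1}. a t > 0"
  shows "u t1 * exp (integral {t0..t1} c) > u t0"
proof -
  note F = lin_comp_F[OF less_imp_le[OF assms(1)] assms(2-4)]
  have "u t0 * exp (integral {t0..t0} c) < u t1 * exp (integral {t0..t1} c)"
    apply (rule DERIV_pos_imp_increasing_open[OF assms(1) _ F(1)])
    using F(2) assms(5) by (metis greaterThanLessThan_iff exp_gt_zero mult_pos_pos)
  then show ?thesis by simp
qed

lemma lin_nonneg:
  fixes u c a :: "real \<Rightarrow> real"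
  assumes "t0 \<le> t1" "continuous_on {t0..t1} u" "continuous_on {t0..t1} c"
    "\<forall>t\<in>{t0<..<t1}. (u has_real_derivative (a t - c t * u t)) (at t)"
    "\<forall>t\<in>{t0<..<t1}. a t \<ge> 0" "u t0 \<ge> 0"
  shows "u t1 \<ge> 0"
proof -
  have "u t1 * exp (integral {t0..t1} c) \<ge> 0" using lin_comp[OF assms(1-5)] assms(6) by linarith
  then show ?thesis by (simp add: zero_le_mult_iff)
qed

lemma lin_pos:
  fixes u c a :: "real \<Rightarrow> real"
  assumes "t0 \<le> t1" "continuous_on {t0..t1} u" "continuous_on {t0..t1} c"
    "\<forall>t\<in>{t0<..<t1}. (u has_real_derivative (a t - c t * u t)) (at t)"
    "\<forall>t\<in>{t0<..<t1}. a t \<ge> 0" "u t0 > 0"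
  shows "u t1 > 0"
proof -
  have "u t1 * exp (integral {t0..t1} c) > 0" using lin_comp[OF assms(1-5)] assms(6) by linarith
  then show ?thesis by (simp add: zero_less_mult_iff)
qed

lemma lin_pos2:
  fixes u c a :: "real \<Rightarrow> real"
  assumes "t0 < t1" "continuous_on {t0..t1} u" "continuous_on {t0..t1} c"
    "\<forall>t\<in>{t0<..<t1}. (u has_real_derivative (a t - c t * u t)) (at t)"
    "\<forall>t\<in>{t0<..<t1}. a t > 0" "u t0 \<ge> 0"
  shows "u t1 > 0"
proof -
  have "u t1 * exp (integral {t0..t1} c) > 0" using lin_comp_strict[OF assms(1-5)] assms(6) by linarith
  then show ?thesis by (simp add: zero_less_mult_iff)
qed

lemma mvt_quot:
  fixes g g' :: "real \<Rightarrow> real"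
  assumes "\<forall>u\<in>{min p q..max p q}. (g has_real_derivative g' u) (at u)" "p \<noteq> q"
  shows "\<exists>\<xi>. min p q < \<xi> \<and> \<xi> < max p q \<and> (g q - g p) / (q - p) = g' \<xi>"
proof (cases "p < q")
  case True
  obtain z where "p < z" "z < q" "g q - g p = (q - p) * g' z"
    using MVT2[OF True, of g g'] assms(1) True by auto
  then show ?thesis using True by (intro exI[of _ z]) auto
next
  case False
  then have pq: "q < p" using assms(2) by auto
  obtain z where "q < z" "z < p" "g p - g q = (p - q) * g' z"
    using MVT2[OF pq, of g g'] assms(1) pq by auto
  then show ?thesis using pq
    by (intro exI[of _ z]) (auto simp: field_simps)
qed

lemma deriv_conv:
  fixes f g g' :: "real \<Rightarrow> real"
  assumes f: "f integrable_on {0..h}" "\<forall>\<tau>\<in>{0..h}. f \<tau> \<ge> 0" and h: "0 \<le> h" and r: "r > 0"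
   and dg: "\<forall>u\<in>{t-h-r..t+r}. (g has_real_derivative g' u) (at u)"
   and cg': "continuous_on {t-h-r..t+r} g'"
  shows "((\<lambda>s. integral {0..h} (\<lambda>\<tau>. f \<tau> * g (s - \<tau>))) has_real_derivative
           integral {0..h} (\<lambda>\<tau>. f \<tau> * g' (t - \<tau>))) (at t)"
proof -
  define K where "K = {t-h-r..t+r}"
  have cg: "continuous_on K g"
    unfolding K_def using dg by (meson DERIV_isCont continuous_at_imp_continuous_on)
  define C where "C = integral {0..h} f"
  have C0: "C \<ge> 0" unfolding C_def using integral_nonneg[OF f(1)] f(2) by auto
  define D where "D = integral {0..h} (\<lambda>\<tau>. f \<tau> * g' (t - \<tau>))"
  have iD: "(\<lambda>\<tau>. f \<tau> * g' (t - \<tau>)) integrable_on {0..h}"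
    by (rule conv_int[OF f]) (rule continuous_on_subset[OF cg'], use r in auto)
  have uc: "uniformly_continuous_on K g'"
    unfolding K_def by (rule compact_uniformly_continuous[OF cg' compact_Icc])
  show ?thesis
    unfolding DERIV_def LIM_eq
  proof (intro allI impI)
    fix \<epsilon> :: real assume \<epsilon>: "\<epsilon> > 0"
    define e' where "e' = \<epsilon> / (C + 1)"
    have e': "e' > 0" unfolding e'_def using \<epsilon> C0 by simp
    obtain d where d: "d > 0" "\<forall>x\<in>K. \<forall>x'\<in>K. dist x' x < d \<longrightarrow> dist (g' x') (g' x) < e'"
      using uc e' unfolding uniformly_continuous_on_def by metis
    show "\<exists>s>0. \<forall>e. e \<noteq> 0 \<and> norm (e - 0) < s \<longrightarrow>
       norm ((integral {0..h} (\<lambda>\<tau>. f \<tau> * g (t + e - \<tau>)) - integral {0..h} (\<lambda>\<tau>. f \<tau> * g (t - \<tau>))) / e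
         - integral {0..h} (\<lambda>\<tau>. f \<tau> * g' (t - \<tau>))) < \<epsilon>"
    proof (intro exI[of _ "min d r"] conjI allI impI)
      show "min d r > 0" using d r by simp
      fix e :: real assume e: "e \<noteq> 0 \<and> norm (e - 0) < min d r"
      have iA: "(\<lambda>\<tau>. f \<tau> * g (t + e - \<tau>)) integrable_on {0..h}"
        by (rule conv_int[OF f]) (rule continuous_on_subset[OF cg], use e in \<open>auto simp: K_def\<close>)
      have iB: "(\<lambda>\<tau>. f \<tau> * g (t - \<tau>)) integrable_on {0..h}"
        by (rule conv_int[OF f]) (rule continuous_on_subset[OF cg], use r in \<open>auto simp: K_def\<close>)
      define q where "q = (\<lambda>\<tau>. (f \<tau> * g (t + e - \<tau>) - f \<tau> * g (t - \<tau>)) / e - f \<tau> * g' (t - \<tau>))"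
      have iq: "q integrable_on {0..h}"
        unfolding q_def by (intro integrable_diff integrable_on_divide iA iB iD)
      have eq: "integral {0..h} q = (integral {0..h} (\<lambda>\<tau>. f \<tau> * g (t + e - \<tau>)) - integral {0..h} (\<lambda>\<tau>. f \<tau> * g (t - \<tau>))) / e
         - integral {0..h} (\<lambda>\<tau>. f \<tau> * g' (t - \<tau>))"
        unfolding q_def
        by (simp add: integral_diff integrable_diff integrable_on_divide iA iB iD)
      have ie: "(\<lambda>\<tau>. f \<tau> * e') integrable_on {0..h}"
        using int_prod[OF f, of "\<lambda>_. e'"] by simp
      have "norm (integral {0..h} q) \<le> integral {0..h} (\<lambda>\<tau>. f \<tau> * e')"
      proof (rule integral_norm_bound_integral[OF iq ie])
        fix \<tau> assume \<tau>: "\<tau> \<in> {0..h}"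
        let ?p = "t - \<tau>" and ?q = "t + e - \<tau>"
        have der: "\<forall>u\<in>{min ?p ?q..max ?p ?q}. (g has_real_derivative g' u) (at u)"
        proof
          fix u assume u: "u \<in> {min ?p ?q..max ?p ?q}"
          have "u \<in> {t-h-r..t+r}" using u \<tau> e by (auto simp: min_def max_def split: if_splits)
          then show "(g has_real_derivative g' u) (at u)" using dg by blast
        qed
        obtain \<xi> where \<xi>: "min ?p ?q < \<xi>" "\<xi> < max ?p ?q" "(g ?q - g ?p) / (?q - ?p) = g' \<xi>"
          using mvt_quot[OF der] e by auto
        have "\<xi> \<in> K" "?p \<in> K" using \<xi> \<tau> e r by (auto simp: K_def)
        moreover have "dist \<xi> ?p < d" using \<xi> e by (auto simp: dist_real_def)
        ultimately have "dist (g' \<xi>) (g' ?p) < e'" using d(2) by blast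
        then have b: "\<bar>(g ?q - g ?p) / e - g' ?p\<bar> \<le> e'" using \<xi>(3) by (simp add: dist_real_def)
        have "q \<tau> = f \<tau> * ((g ?q - g ?p) / e - g' ?p)"
          unfolding q_def by (simp add: field_simps)
        then have "norm (q \<tau>) = f \<tau> * \<bar>(g ?q - g ?p) / e - g' ?p\<bar>"
          using f(2) \<tau> by (simp add: abs_mult)
        also have "\<dots> \<le> f \<tau> * e'" using b f(2) \<tau> by (simp add: mult_left_mono)
        finally show "norm (q \<tau>) \<le> f \<tau> * e'" .
      qed
      also have "\<dots> = C * e'" unfolding C_def by simp
      also have "\<dots> < \<epsilon>" unfolding e'_def using \<epsilon> C0 by (simp add: field_simps)
      finally show "norm ((integral {0..h} (\<lambda>\<tau>. f \<tau> * g (t + e - \<tau>)) - integral {0..h} (\<lambda>\<tau>. f \<tau> * g (t - \<tau>))) / e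
         - integral {0..h} (\<lambda>\<tau>. f \<tau> * g' (t - \<tau>))) < \<epsilon>" using eq by simp
    qed
  qed
qed

lemma ub_comp:
  fixes W W' :: "real \<Rightarrow> real"
  assumes m: "m > 0" and d: "\<forall>t\<ge>t0. (W has_real_derivative W' t) (at t)"
    and le: "\<forall>t\<ge>t0. W' t \<le> A - m * W t"
  shows "\<forall>t\<ge>t0. W t \<le> max (W t0) (A/m)"
proof (intro allI impI)
  fix t assume t: "t \<ge> t0"
  define F where "F = (\<lambda>s. (W s - A/m) * exp (m * s))"
  have "F t \<le> F t0"
  proof (rule DERIV_nonpos_imp_nonincreasing[OF t])
    fix s assume s: "t0 \<le> s" "s \<le> t"
    have "(F has_real_derivative W' s * exp (m * s) + (W s - A/m) * (exp (m * s) * m)) (at s)"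
      unfolding F_def using d s by (auto intro!: derivative_eq_intros)
    moreover have "W' s * exp (m * s) + (W s - A/m) * (exp (m * s) * m) = (W' s + m * W s - A) * exp (m * s)"
      using m by (simp add: field_simps)
    moreover have "(W' s + m * W s - A) * exp (m * s) \<le> 0"
      using le s by (intro mult_nonpos_nonneg) auto
    ultimately show "\<exists>y. (F has_real_derivative y) (at s) \<and> y \<le> 0" by metis
  qed
  then have *: "(W t - A/m) * exp (m * t) \<le> (W t0 - A/m) * exp (m * t0)" unfolding F_def .
  show "W t \<le> max (W t0) (A/m)"
  proof (cases "W t0 - A/m \<le> 0")
    case True
    then have "(W t - A/m) * exp (m * t) \<le> 0" using * by (smt (verit) exp_gt_zero mult_nonpos_nonneg)
    then show ?thesis by (simp add: mult_le_0_iff)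
  next
    case False
    have "exp (m * t0) \<le> exp (m * t)" using t m by simp
    then have "(W t0 - A/m) * exp (m * t0) \<le> (W t0 - A/m) * exp (m * t)"
      using False by (intro mult_left_mono) auto
    with * have "(W t - A/m) * exp (m * t) \<le> (W t0 - A/m) * exp (m * t)" by linarith
    then have "W t - A/m \<le> W t0 - A/m" by simp
    then show ?thesis by simp
  qed
qed

lemma hit_deriv:
  fixes Y :: "real \<Rightarrow> real"
  assumes "(Y has_real_derivative D) (at t)" "Y t = 0" "t > 0" "\<forall>u\<in>{0..<t}. Y u > 0"
  shows "D \<le> 0"
proof (rule ccontr)
  assume "\<not> D \<le> 0"
  then obtain d where d: "d > 0" "\<forall>h>0. h < d \<longrightarrow> Y (t - h) < Y t"
    using DERIV_pos_inc_left[OF assms(1)] by force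
  let ?h = "min (d/2) (t/2)"
  have "Y (t - ?h) < 0" using d assms(2,3) by auto
  moreover have "Y (t - ?h) > 0" using assms(3,4) d(1) by auto
  ultimately show False by simp
qed

lemma hit:
  fixes Y V :: "real \<Rightarrow> real"
  assumes cY: "continuous_on {0..T} Y" and cV: "continuous_on {0..T} V"
    and Y0: "Y 0 > 0" and V0: "V 0 > 0"
    and H: "\<And>t. t \<in> {0<..T} \<Longrightarrow> \<forall>u\<in>{0..<t}. Y u > 0 \<and> V u > 0 \<Longrightarrow> Y t \<ge> 0 \<Longrightarrow> V t \<ge> 0
        \<Longrightarrow> Y t = 0 \<or> V t = 0 \<Longrightarrow> False"
  shows "\<forall>t\<in>{0..T}. Y t > 0 \<and> V t > 0"
proof (rule ccontr)
  assume neg: "\<not> ?thesis"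
  define G where "G = (\<lambda>t. min (Y t) (V t))"
  have cG: "continuous_on {0..T} G" unfolding G_def by (intro continuous_intros cY cV)
  define S where "S = {0..T} \<inter> G -` {..0}"
  have Sne: "S \<noteq> {}" using neg unfolding S_def G_def by (auto simp: not_less)
  have Scl: "closed S" unfolding S_def by (rule continuous_closed_preimage[OF cG]) auto
  have Sbd: "bdd_below S" unfolding S_def by (auto intro: bdd_belowI[of _ 0])
  define t1 where "t1 = Inf S"
  have t1S: "t1 \<in> S" unfolding t1_def by (rule closed_contains_Inf[OF Sne Sbd Scl])
  have below: "\<And>u. u \<in> {0..<t1} \<Longrightarrow> G u > 0"
  proof (rule ccontr)
    fix u assume u: "u \<in> {0..<t1}" "\<not> G u > 0"
    then have "u \<in> S" using t1S unfolding S_def by auto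
    then have "t1 \<le> u" unfolding t1_def using Sbd by (rule cInf_lower)
    then show False using u by auto
  qed
  have G0: "G 0 > 0" unfolding G_def using Y0 V0 by simp
  have t1pos: "t1 > 0" using t1S G0 unfolding S_def by (metis IntD1 IntD2 atLeastAtMost_iff atMost_iff
     less_eq_real_def not_le vimage_eq)
  have Gt1: "G t1 = 0"
  proof (rule ccontr)
    assume "G t1 \<noteq> 0"
    then have "G t1 < 0" using t1S unfolding S_def by auto
    then obtain x where x: "0 \<le> x" "x \<le> t1" "G x = 0"
      using IVT2'[of G t1 0 0] G0 t1S cG unfolding S_def
      by (metis IntD1 atLeastAtMost_iff continuous_on_subset less_eq_real_def atLeastatMost_subset_iff order_refl)
    then have "x < t1" using \<open>G t1 \<noteq> 0\<close> by (metis le_less)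
    then show False using below x by force
  qed
  have t1T: "t1 \<in> {0<..T}" using t1S t1pos unfolding S_def by auto
  show False
  proof (rule H[OF t1T])
    show "\<forall>u\<in>{0..<t1}. Y u > 0 \<and> V u > 0" using below unfolding G_def by auto
    show "Y t1 \<ge> 0" "V t1 \<ge> 0" "Y t1 = 0 \<or> V t1 = 0" using Gt1 unfolding G_def by (auto simp: min_def split: if_splits)
  qed
qed

theorem lemma2p1:
  fixes s d k kd \<delta> p Nd \<mu> q b h1 h2 z0 :: real
    and f1 f2 \<phi>1 \<phi>2 \<phi>3 x y v z :: "real \<Rightarrow> real"
  assumes pars: "s > 0" "d > 0" "k > 0" "kd > 0" "\<delta> > 0" "p > 0" "Nd > 0" "\<mu> > 0" "q > 0" "b > 0"
    and h: "h1 > 0" "h2 > 0"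
    and f1: "\<forall>\<tau>\<in>{0..h1}. f1 \<tau> \<ge> 0" "f1 integrable_on {0..h1}" "integral {0..h1} f1 = 1"
    and f2: "\<forall>\<tau>\<in>{0..h2}. f2 \<tau> \<ge> 0" "f2 integrable_on {0..h2}" "integral {0..h2} f2 = 1"
    and phi: "continuous_on {-max h1 h2..0} \<phi>1" "continuous_on {-max h1 h2..0} \<phi>2"
             "continuous_on {-max h1 h2..0} \<phi>3"
             "\<forall>\<theta>\<in>{-max h1 h2..0}. \<phi>1 \<theta> \<ge> 0 \<and> \<phi>2 \<theta> \<ge> 0 \<and> \<phi>3 \<theta> \<ge> 0"
    and z0: "z0 \<ge> 0"
    and sol: "ddesol s d k kd \<delta> p Nd \<mu> q b h1 h2 f1 f2 \<phi>1 \<phi>2 \<phi>3 z0 x y v z"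
  shows "(\<forall>t>0. x t \<ge> 0 \<and> y t \<ge> 0 \<and> v t \<ge> 0 \<and> z t \<ge> 0)
    \<and> ((z0 > 0 \<and>
         (\<phi>2 0 + integral {0..h1} (\<lambda>\<tau>. f1 \<tau> * \<phi>1 (-\<tau>) * \<phi>3 (-\<tau>)) > 0 \<or>
          \<phi>3 0 + integral {0..h2} (\<lambda>\<tau>. f2 \<tau> * \<phi>2 (-\<tau>)) > 0))
        \<longrightarrow> (\<forall>t > max h1 h2. x t > 0 \<and> y t > 0 \<and> v t > 0 \<and> z t > 0))
    \<and> (\<exists>M>0. \<exists>T. \<forall>t\<ge>T. x t \<le> M \<and> y t \<le> M \<and> v t \<le> M \<and> z t \<le> M)"
proof -
  define hb where "hb = max h1 h2"
  have hb: "hb > 0" "h1 \<le> hb" "h2 \<le> hb" unfolding hb_def using h by auto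
  have cx: "continuous_on {-hb..} x" and cy: "continuous_on {-hb..} y" and cv: "continuous_on {-hb..} v"
    and cz: "continuous_on {0..} z"
    and init: "\<forall>\<theta>\<in>{-hb..0}. x \<theta> = \<phi>1 \<theta> \<and> y \<theta> = \<phi>2 \<theta> \<and> v \<theta> = \<phi>3 \<theta>"
    and zz0: "z 0 = z0"
    and D: "\<forall>t>0.
        (x has_real_derivative (s - d * x t - k * x t * v t)) (at t) \<and>
        (y has_real_derivative
           (kd * integral {0..h1} (\<lambda>\<tau>. f1 \<tau> * x (t - \<tau>) * v (t - \<tau>))
            - \<delta> * y t - p * y t * z t)) (at t) \<and>
        (v has_real_derivative
           (Nd * \<delta> * integral {0..h2} (\<lambda>\<tau>. f2 \<tau> * y (t - \<tau>)) - \<mu> * v t)) (at t) \<and>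
        (z has_real_derivative (q * y t * z t - b * z t)) (at t)"
    using sol unfolding ddesol_def Let_def hb_def by auto
  define I1 where "I1 = (\<lambda>t. integral {0..h1} (\<lambda>\<tau>. f1 \<tau> * x (t - \<tau>) * v (t - \<tau>)))"
  define I2 where "I2 = (\<lambda>t. integral {0..h2} (\<lambda>\<tau>. f2 \<tau> * y (t - \<tau>)))"
  have dx: "\<And>t. t > 0 \<Longrightarrow> (x has_real_derivative (s - d * x t - k * x t * v t)) (at t)"
    and dy: "\<And>t. t > 0 \<Longrightarrow> (y has_real_derivative (kd * I1 t - \<delta> * y t - p * y t * z t)) (at t)"
    and dv: "\<And>t. t > 0 \<Longrightarrow> (v has_real_derivative (Nd * \<delta> * I2 t - \<mu> * v t)) (at t)"
    and dz: "\<And>t. t > 0 \<Longrightarrow> (z has_real_derivative (q * y t * z t - b * z t)) (at t)"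
    using D unfolding I1_def I2_def by auto
  have cxs: "\<And>a b. -hb \<le> a \<Longrightarrow> continuous_on {a..b} x" by (rule continuous_on_subset[OF cx]) auto
  have cys: "\<And>a b. -hb \<le> a \<Longrightarrow> continuous_on {a..b} y" by (rule continuous_on_subset[OF cy]) auto
  have cvs: "\<And>a b. -hb \<le> a \<Longrightarrow> continuous_on {a..b} v" by (rule continuous_on_subset[OF cv]) auto
  have czs: "\<And>a b. 0 \<le> a \<Longrightarrow> continuous_on {a..b} z" by (rule continuous_on_subset[OF cz]) auto
  have cxvs: "\<And>a b. -hb \<le> a \<Longrightarrow> continuous_on {a..b} (\<lambda>u. x u * v u)"
    using cxs cvs by (intro continuous_on_mult) auto
  have I1alt: "\<And>t. I1 t = integral {0..h1} (\<lambda>\<tau>. f1 \<tau> * (\<lambda>u. x u * v u) (t - \<tau>))"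
    unfolding I1_def by (simp add: mult.assoc)
  have init_nn: "\<And>\<theta>. \<theta> \<in> {-hb..0} \<Longrightarrow> x \<theta> \<ge> 0 \<and> y \<theta> \<ge> 0 \<and> v \<theta> \<ge> 0"
    using init phi(4) unfolding hb_def by auto

  have xpos: "\<And>t. t > 0 \<Longrightarrow> x t > 0"
  proof -
    fix t :: real assume t: "t > 0"
    show "x t > 0"
    proof (rule lin_pos2[where c = "\<lambda>t. d + k * v t" and a = "\<lambda>_. s", OF t])
      show "continuous_on {0..t} x" using cxs hb by simp
      show "continuous_on {0..t} (\<lambda>t. d + k * v t)" using cvs hb by (intro continuous_intros) auto
      show "\<forall>u\<in>{0<..<t}. (x has_real_derivative s - (d + k * v u) * x u) (at u)"
      proof
        fix u assume "u \<in> {0<..<t}"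
        then have "(x has_real_derivative (s - d * x u - k * x u * v u)) (at u)" using dx by auto
        moreover have "s - d * x u - k * x u * v u = s - (d + k * v u) * x u" by (simp add: algebra_simps)
        ultimately show "(x has_real_derivative s - (d + k * v u) * x u) (at u)" by simp
      qed
      show "\<forall>u\<in>{0<..<t}. s > 0" using pars by auto
      show "x 0 \<ge> 0" using init_nn hb by auto
    qed
  qed
  have xnn: "\<And>u. u \<ge> -hb \<Longrightarrow> x u \<ge> 0"
    using xpos init_nn by (metis atLeastAtMost_iff less_eq_real_def not_le)

  have zlin: "\<And>t. t \<ge> 0 \<Longrightarrow> z t * exp (integral {0..t} (\<lambda>u. b - q * y u)) \<ge> z0"
  proof -
    fix t :: real assume t: "t \<ge> 0"
    have "z t * exp (integral {0..t} (\<lambda>u. b - q * y u)) \<ge> z 0"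
    proof (rule lin_comp[where a = "\<lambda>_. 0", OF t])
      show "continuous_on {0..t} z" using czs by simp
      show "continuous_on {0..t} (\<lambda>u. b - q * y u)" using cys hb by (intro continuous_intros) auto
      show "\<forall>u\<in>{0<..<t}. (z has_real_derivative 0 - (b - q * y u) * z u) (at u)"
      proof
        fix u assume "u \<in> {0<..<t}"
        then have "(z has_real_derivative (q * y u * z u - b * z u)) (at u)" using dz by auto
        moreover have "q * y u * z u - b * z u = 0 - (b - q * y u) * z u" by (simp add: algebra_simps)
        ultimately show "(z has_real_derivative 0 - (b - q * y u) * z u) (at u)" by simp
      qed
    qed auto
    then show "z t * exp (integral {0..t} (\<lambda>u. b - q * y u)) \<ge> z0" using zz0 by simp
  qed
  have znn: "\<And>t. t \<ge> 0 \<Longrightarrow> z t \<ge> 0"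
  proof -
    fix t :: real assume "t \<ge> 0"
    then have "z t * exp (integral {0..t} (\<lambda>u. b - q * y u)) \<ge> 0" using zlin z0 by force
    then show "z t \<ge> 0" by (simp add: zero_le_mult_iff)
  qed
  have zpos: "\<And>t. t \<ge> 0 \<Longrightarrow> z0 > 0 \<Longrightarrow> z t > 0"
  proof -
    fix t :: real assume "t \<ge> 0" "z0 > 0"
    then have "z t * exp (integral {0..t} (\<lambda>u. b - q * y u)) > 0" using zlin by force
    then show "z t > 0" by (simp add: zero_less_mult_iff)
  qed

  have yvnn_T: "\<And>T. T > 0 \<Longrightarrow> \<forall>t\<in>{0..T}. y t \<ge> 0 \<and> v t \<ge> 0"
  proof -
    fix T :: real assume T: "T > 0"
    obtain u0 where u0: "u0 \<in> {-hb..T}" "\<forall>u\<in>{-hb..T}. x u \<le> x u0"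
      using continuous_attains_sup[OF compact_Icc _ cxs[of "-hb" T]] T hb by auto
    define X where "X = x u0"
    have X: "X \<ge> 0" "\<And>u. u \<in> {-hb..T} \<Longrightarrow> 0 \<le> x u \<and> x u \<le> X"
      unfolding X_def using u0 xnn by auto
    define L where "L = kd * X + Nd * \<delta> + 1"
    have L: "L > 0" unfolding L_def using X pars by (simp add: add_nonneg_pos)
    have main: "\<And>\<epsilon>. \<epsilon> > 0 \<Longrightarrow> \<forall>t\<in>{0..T}. y t + \<epsilon> * exp (L * t) > 0 \<and> v t + \<epsilon> * exp (L * t) > 0"
    proof -
      fix \<epsilon> :: real assume \<epsilon>: "\<epsilon> > 0"
      define E where "E = (\<lambda>t. \<epsilon> * exp (L * t))"
      have Epos: "\<And>t. E t > 0" unfolding E_def using \<epsilon> by simp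
      have Emono: "\<And>u t. u \<le> t \<Longrightarrow> E u \<le> E t" unfolding E_def using \<epsilon> L by simp
      have dE: "\<And>t. (E has_real_derivative L * E t) (at t)"
        unfolding E_def by (auto intro!: derivative_eq_intros)
      have "\<forall>t\<in>{0..T}. (\<lambda>t. y t + E t) t > 0 \<and> (\<lambda>t. v t + E t) t > 0"
      proof (rule hit)
        show "continuous_on {0..T} (\<lambda>t. y t + E t)" unfolding E_def using cys hb
          by (intro continuous_intros) auto
        show "continuous_on {0..T} (\<lambda>t. v t + E t)" unfolding E_def using cvs hb
          by (intro continuous_intros) auto
        show "y 0 + E 0 > 0" "v 0 + E 0 > 0" using init_nn[of 0] hb Epos[of 0] by auto
        fix t assume t: "t \<in> {0<..T}" and past: "\<forall>u\<in>{0..<t}. y u + E u > 0 \<and> v u + E u > 0"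
          and Yt: "y t + E t \<ge> 0" and Vt: "v t + E t \<ge> 0" and zero: "y t + E t = 0 \<or> v t + E t = 0"
        have yb: "\<And>u. u \<in> {-hb..t} \<Longrightarrow> y u \<ge> - E t"
        proof -
          fix u assume u: "u \<in> {-hb..t}"
          show "y u \<ge> - E t"
          proof (cases "u \<le> 0")
            case True then show ?thesis using init_nn[of u] u Epos[of t] by auto
          next
            case False
            then show ?thesis
            proof (cases "u = t")
              case True then show ?thesis using Yt by simp
            next
              case False
              then have "y u + E u > 0" using past u \<open>\<not> u \<le> 0\<close> by auto
              then show ?thesis using Emono[of u t] u by auto
            qed
          qed
        qed
        have vb: "\<And>u. u \<in> {-hb..t} \<Longrightarrow> v u \<ge> - E t"
        proof -
          fix u assume u: "u \<in> {-hb..t}"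
          show "v u \<ge> - E t"
          proof (cases "u \<le> 0")
            case True then show ?thesis using init_nn[of u] u Epos[of t] by auto
          next
            case False
            then show ?thesis
            proof (cases "u = t")
              case True then show ?thesis using Vt by simp
            next
              case False
              then have "v u + E u > 0" using past u \<open>\<not> u \<le> 0\<close> by auto
              then show ?thesis using Emono[of u t] u by auto
            qed
          qed
        qed
        have tpos: "t > 0" and tT: "t \<le> T" using t by auto
        have pastY: "\<forall>u\<in>{0..<t}. (\<lambda>t. y t + E t) u > 0" and pastV: "\<forall>u\<in>{0..<t}. (\<lambda>t. v t + E t) u > 0"
          using past by auto
        from zero show False
        proof
          assume Y0: "y t + E t = 0"
          have xvb: "\<forall>u\<in>{t-h1..t}. x u * v u \<ge> - (X * E t)"
          proof
            fix u assume u: "u \<in> {t-h1..t}"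
            then have u': "u \<in> {-hb..t}" "u \<in> {-hb..T}" using hb tT tpos by auto
            have "0 \<le> x u" "x u \<le> X" using X(2)[OF u'(2)] by auto
            moreover have "v u \<ge> - E t" using vb[OF u'(1)] .
            moreover have "E t > 0" by (rule Epos)
            ultimately show "x u * v u \<ge> - (X * E t)"
            proof (cases "v u \<ge> 0")
              case True
              then show ?thesis using \<open>0 \<le> x u\<close> X(1) \<open>E t > 0\<close> by (smt (verit) mult_nonneg_nonneg)
            next
              case False
              have "x u * v u \<ge> X * v u" using mult_right_mono_neg[OF \<open>x u \<le> X\<close>, of "v u"] False by simp
              moreover have "X * v u \<ge> X * (- E t)" using mult_left_mono[OF \<open>v u \<ge> - E t\<close> X(1)] .
              ultimately show ?thesis by simp
            qed
          qed
          have I1b: "I1 t \<ge> - (X * E t)"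
            unfolding I1alt by (rule conv_ge[OF f1(2,1,3) cxvs xvb]) (use hb tpos in auto)
          have "((\<lambda>t. y t + E t) has_real_derivative (kd * I1 t - \<delta> * y t - p * y t * z t) + L * E t) (at t)"
            using dy[OF tpos] dE[of t] by (rule DERIV_add)
          then have "(kd * I1 t - \<delta> * y t - p * y t * z t) + L * E t \<le> 0"
            using hit_deriv[OF _ Y0 tpos pastY] by blast
          moreover have "kd * I1 t \<ge> - kd * (X * E t)" using mult_left_mono[OF I1b, of kd] pars by simp
          moreover have "- \<delta> * y t - p * y t * z t \<ge> 0"
          proof -
            have "y t \<le> 0" using Y0 Epos[of t] by linarith
            moreover have "z t \<ge> 0" using znn tpos by simp
            ultimately have "p * y t * z t \<le> 0" "\<delta> * y t \<le> 0" using pars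
              by (auto simp: mult_nonpos_nonneg mult_nonneg_nonpos)
            then show ?thesis by linarith
          qed
          moreover have "L * E t - kd * (X * E t) > 0"
          proof -
            have "L * E t - kd * (X * E t) = (Nd * \<delta> + 1) * E t" unfolding L_def by (simp add: algebra_simps)
            then show ?thesis using Epos[of t] pars by (simp add: add_pos_pos)
          qed
          ultimately show False by linarith
        next
          assume V0: "v t + E t = 0"
          have yb': "\<forall>u\<in>{t-h2..t}. y u \<ge> - E t" using yb hb tpos by auto
          have I2b: "I2 t \<ge> - E t"
            unfolding I2_def by (rule conv_ge[OF f2(2,1,3) cys yb']) (use hb tpos in auto)
          have "((\<lambda>t. v t + E t) has_real_derivative (Nd * \<delta> * I2 t - \<mu> * v t) + L * E t) (at t)"
            using dv[OF tpos] dE[of t] by (rule DERIV_add)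
          then have "(Nd * \<delta> * I2 t - \<mu> * v t) + L * E t \<le> 0"
            using hit_deriv[OF _ V0 tpos pastV] by blast
          moreover have "Nd * \<delta> * I2 t \<ge> - (Nd * \<delta> * E t)" using mult_left_mono[OF I2b, of "Nd * \<delta>"] pars by simp
          moreover have "- \<mu> * v t \<ge> 0" using V0 Epos[of t] pars by (simp add: mult_nonneg_nonpos)
          moreover have "L * E t - (Nd * \<delta>) * E t > 0"
          proof -
            have "L * E t - (Nd * \<delta>) * E t = (kd * X + 1) * E t" unfolding L_def by (simp add: algebra_simps)
            then show ?thesis using Epos[of t] pars X by (simp add: add_nonneg_pos)
          qed
          ultimately show False by linarith
        qed
      qed
      then show "\<forall>t\<in>{0..T}. y t + \<epsilon> * exp (L * t) > 0 \<and> v t + \<epsilon> * exp (L * t) > 0"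
        unfolding E_def by simp
    qed
    show "\<forall>t\<in>{0..T}. y t \<ge> 0 \<and> v t \<ge> 0"
    proof
      fix t assume t: "t \<in> {0..T}"
      show "y t \<ge> 0 \<and> v t \<ge> 0"
      proof (rule ccontr)
        assume "\<not> (y t \<ge> 0 \<and> v t \<ge> 0)"
        then have "min (y t) (v t) < 0" by auto
        define \<epsilon> where "\<epsilon> = - min (y t) (v t) / exp (L * t)"
        have "\<epsilon> > 0" unfolding \<epsilon>_def using \<open>min (y t) (v t) < 0\<close> by (simp add: divide_neg_pos)
        from main[OF this] t have "y t + \<epsilon> * exp (L * t) > 0" "v t + \<epsilon> * exp (L * t) > 0" by auto
        moreover have "\<epsilon> * exp (L * t) = - min (y t) (v t)" unfolding \<epsilon>_def by simp
        ultimately show False by linarith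
      qed
    qed
  qed
  have ynn: "\<And>u. u \<ge> -hb \<Longrightarrow> y u \<ge> 0" and vnn: "\<And>u. u \<ge> -hb \<Longrightarrow> v u \<ge> 0"
  proof -
    fix u :: real assume u: "u \<ge> -hb"
    have "y u \<ge> 0 \<and> v u \<ge> 0"
    proof (cases "u \<le> 0")
      case True then show ?thesis using init_nn[of u] u by auto
    next
      case False then show ?thesis using yvnn_T[of u] by auto
    qed
    then show "y u \<ge> 0" "v u \<ge> 0" by auto
  qed
  have part1: "\<forall>t>0. x t \<ge> 0 \<and> y t \<ge> 0 \<and> v t \<ge> 0 \<and> z t \<ge> 0"
    using hb(1) by (auto intro!: xnn ynn vnn znn)

  have I1nn: "\<And>t. t \<ge> 0 \<Longrightarrow> I1 t \<ge> 0"
    unfolding I1alt by (rule conv_nonneg[OF f1(2,1) cxvs]) (use hb ynn xnn vnn in \<open>auto intro!: mult_nonneg_nonneg\<close>)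
  have I2nn: "\<And>t. t \<ge> 0 \<Longrightarrow> I2 t \<ge> 0"
    unfolding I2_def by (rule conv_nonneg[OF f2(2,1) cys]) (use hb ynn in auto)
  have ylin: "\<And>t0 t1. 0 \<le> t0 \<Longrightarrow> t0 \<le> t1 \<Longrightarrow> \<forall>u\<in>{t0<..<t1}. (y has_real_derivative kd * I1 u - (\<delta> + p * z u) * y u) (at u)"
  proof (intro ballI)
    fix t0 t1 u :: real assume "0 \<le> t0" "u \<in> {t0<..<t1}"
    then have "u > 0" by auto
    from dy[OF this] show "(y has_real_derivative kd * I1 u - (\<delta> + p * z u) * y u) (at u)"
      by (simp add: algebra_simps)
  qed
  have vlin: "\<And>t0 t1. 0 \<le> t0 \<Longrightarrow> t0 \<le> t1 \<Longrightarrow> \<forall>u\<in>{t0<..<t1}. (v has_real_derivative Nd * \<delta> * I2 u - \<mu> * v u) (at u)"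
    using dv by auto
  have cyz: "\<And>t0 t1. 0 \<le> t0 \<Longrightarrow> continuous_on {t0..t1} (\<lambda>u. \<delta> + p * z u)"
    using czs by (intro continuous_intros) auto
  have yfrom: "\<And>t0 t1. 0 \<le> t0 \<Longrightarrow> t0 \<le> t1 \<Longrightarrow> y t0 > 0 \<Longrightarrow> y t1 > 0"
  proof -
    fix t0 t1 :: real assume a: "0 \<le> t0" "t0 \<le> t1" "y t0 > 0"
    show "y t1 > 0"
      by (rule lin_pos[where a = "\<lambda>u. kd * I1 u" and c = "\<lambda>u. \<delta> + p * z u", OF a(2) cys cyz ylin _ a(3)])
         (use a hb I1nn pars in auto)
  qed
  have ypos2: "\<And>t0 t1. 0 \<le> t0 \<Longrightarrow> t0 < t1 \<Longrightarrow> \<forall>u\<in>{t0<..<t1}. I1 u > 0 \<Longrightarrow> y t1 > 0"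
  proof -
    fix t0 t1 :: real assume a: "0 \<le> t0" "t0 < t1" "\<forall>u\<in>{t0<..<t1}. I1 u > 0"
    show "y t1 > 0"
      by (rule lin_pos2[where a = "\<lambda>u. kd * I1 u" and c = "\<lambda>u. \<delta> + p * z u", OF a(2) cys cyz ylin])
         (use a hb ynn pars in auto)
  qed
  have vfrom: "\<And>t0 t1. 0 \<le> t0 \<Longrightarrow> t0 \<le> t1 \<Longrightarrow> v t0 > 0 \<Longrightarrow> v t1 > 0"
  proof -
    fix t0 t1 :: real assume a: "0 \<le> t0" "t0 \<le> t1" "v t0 > 0"
    show "v t1 > 0"
      by (rule lin_pos[where a = "\<lambda>u. Nd * \<delta> * I2 u" and c = "\<lambda>_. \<mu>", OF a(2) cvs _ vlin _ a(3)])
         (use a hb I2nn pars in auto)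
  qed
  have vpos2: "\<And>t0 t1. 0 \<le> t0 \<Longrightarrow> t0 < t1 \<Longrightarrow> \<forall>u\<in>{t0<..<t1}. I2 u > 0 \<Longrightarrow> v t1 > 0"
  proof -
    fix t0 t1 :: real assume a: "0 \<le> t0" "t0 < t1" "\<forall>u\<in>{t0<..<t1}. I2 u > 0"
    show "v t1 > 0"
      by (rule lin_pos2[where a = "\<lambda>u. Nd * \<delta> * I2 u" and c = "\<lambda>_. \<mu>", OF a(2) cvs _ vlin])
         (use a hb vnn pars in auto)
  qed
  have part2: "(z0 > 0 \<and>
         (\<phi>2 0 + integral {0..h1} (\<lambda>\<tau>. f1 \<tau> * \<phi>1 (-\<tau>) * \<phi>3 (-\<tau>)) > 0 \<or>
          \<phi>3 0 + integral {0..h2} (\<lambda>\<tau>. f2 \<tau> * \<phi>2 (-\<tau>)) > 0))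
        \<longrightarrow> (\<forall>t > max h1 h2. x t > 0 \<and> y t > 0 \<and> v t > 0 \<and> z t > 0)"
  proof (intro impI allI)
    fix t assume A: "z0 > 0 \<and>
         (\<phi>2 0 + integral {0..h1} (\<lambda>\<tau>. f1 \<tau> * \<phi>1 (-\<tau>) * \<phi>3 (-\<tau>)) > 0 \<or>
          \<phi>3 0 + integral {0..h2} (\<lambda>\<tau>. f2 \<tau> * \<phi>2 (-\<tau>)) > 0)" and t: "t > max h1 h2"
    have thb: "t > hb" using t hb_def by simp
    have J1: "integral {0..h1} (\<lambda>\<tau>. f1 \<tau> * \<phi>1 (-\<tau>) * \<phi>3 (-\<tau>)) = I1 0"
      unfolding I1_def by (rule integral_cong) (use init hb in auto)
    have J2: "integral {0..h2} (\<lambda>\<tau>. f2 \<tau> * \<phi>2 (-\<tau>)) = I2 0"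
      unfolding I2_def by (rule integral_cong) (use init hb in auto)
    have p20: "\<phi>2 0 = y 0" "\<phi>3 0 = v 0" using init hb by auto
    have yv: "y t > 0 \<and> v t > 0"
      using A
    proof (elim conjE disjE)
      assume "\<phi>2 0 + integral {0..h1} (\<lambda>\<tau>. f1 \<tau> * \<phi>1 (-\<tau>) * \<phi>3 (-\<tau>)) > 0"
      then have c: "y 0 + I1 0 > 0" using J1 p20 by simp
      have yall: "\<And>t. t > 0 \<Longrightarrow> y t > 0"
      proof -
        fix t :: real assume t: "t > 0"
        show "y t > 0"
        proof (cases "y 0 > 0")
          case True then show ?thesis using yfrom[of 0 t] t by simp
        next
          case False
          then have "I1 0 > 0" using c by simp
          then have "integral {0..h1} (\<lambda>\<tau>. f1 \<tau> * (\<lambda>u. x u * v u) (0 - \<tau>)) > 0" using I1alt by simp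
          from conv_cont0[OF f1(2,1,3) cxvs[of "-hb" 1] _ _ this] hb
          obtain \<eta> where \<eta>: "\<eta> > 0" "\<forall>t. 0 \<le> t \<and> t < \<eta> \<longrightarrow> I1 t > 0"
            using I1alt by auto
          define t' where "t' = min (\<eta>/2) t"
          have t': "t' > 0" "t' \<le> t" "t' < \<eta>" using \<eta> t unfolding t'_def by auto
          have "y t' > 0" by (rule ypos2[of 0 t']) (use t' \<eta> in auto)
          then show ?thesis using yfrom[of t' t] t' by simp
        qed
      qed
      have "v t > 0"
      proof (rule vpos2[of h2 t])
        show "0 \<le> h2" "h2 < t" using h thb hb by auto
        show "\<forall>u\<in>{h2<..<t}. I2 u > 0"
        proof
          fix u assume u: "u \<in> {h2<..<t}"
          show "I2 u > 0" unfolding I2_def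
            by (rule conv_pos[OF f2(2,1,3) cys]) (use u h hb yall in auto)
        qed
      qed
      then show ?thesis using yall thb hb by auto
    next
      assume "\<phi>3 0 + integral {0..h2} (\<lambda>\<tau>. f2 \<tau> * \<phi>2 (-\<tau>)) > 0"
      then have c: "v 0 + I2 0 > 0" using J2 p20 by simp
      have vall: "\<And>t. t > 0 \<Longrightarrow> v t > 0"
      proof -
        fix t :: real assume t: "t > 0"
        show "v t > 0"
        proof (cases "v 0 > 0")
          case True then show ?thesis using vfrom[of 0 t] t by simp
        next
          case False
          then have "I2 0 > 0" using c by simp
          then have "integral {0..h2} (\<lambda>\<tau>. f2 \<tau> * y (0 - \<tau>)) > 0" using I2_def by simp
          from conv_cont0[OF f2(2,1,3) cys[of "-hb" 1] _ _ this] hb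
          obtain \<eta> where \<eta>: "\<eta> > 0" "\<forall>t. 0 \<le> t \<and> t < \<eta> \<longrightarrow> I2 t > 0"
            using I2_def by auto
          define t' where "t' = min (\<eta>/2) t"
          have t': "t' > 0" "t' \<le> t" "t' < \<eta>" using \<eta> t unfolding t'_def by auto
          have "v t' > 0" by (rule vpos2[of 0 t']) (use t' \<eta> in auto)
          then show ?thesis using vfrom[of t' t] t' by simp
        qed
      qed
      have "y t > 0"
      proof (rule ypos2[of h1 t])
        show "0 \<le> h1" "h1 < t" using h thb hb by auto
        show "\<forall>u\<in>{h1<..<t}. I1 u > 0"
        proof
          fix u assume u: "u \<in> {h1<..<t}"
          show "I1 u > 0" unfolding I1alt
            by (rule conv_pos[OF f1(2,1,3) cxvs]) (use u h hb vall xpos in \<open>auto intro!: mult_pos_pos\<close>)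
        qed
      qed
      then show ?thesis using vall thb hb by auto
    qed
    then show "x t > 0 \<and> y t > 0 \<and> v t > 0 \<and> z t > 0"
      using xpos zpos A thb hb by auto
  qed

  define t0 where "t0 = hb + 1"
  define X1 where "X1 = (\<lambda>t. integral {0..h1} (\<lambda>\<tau>. f1 \<tau> * x (t - \<tau>)))"
  define W where "W = (\<lambda>t. (kd / k) * X1 t + y t + (p / q) * z t)"
  define m where "m = min d (min \<delta> b)"
  have m: "m > 0" "m \<le> d" "m \<le> \<delta>" "m \<le> b" unfolding m_def using pars by auto
  define W' where "W' = (\<lambda>t. kd * s / k - d * ((kd / k) * X1 t) - \<delta> * y t - b * ((p / q) * z t))"
  have X1nn: "\<And>t. t \<ge> 0 \<Longrightarrow> X1 t \<ge> 0"
    unfolding X1_def by (rule conv_nonneg[OF f1(2,1) cxs]) (use hb xnn in auto)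
  have dW: "\<forall>t\<ge>t0. (W has_real_derivative W' t) (at t)"
  proof (intro allI impI)
    fix t assume t: "t \<ge> t0"
    have tpos: "t > 0" using t hb unfolding t0_def by simp
    have dX1: "(X1 has_real_derivative
        integral {0..h1} (\<lambda>\<tau>. f1 \<tau> * (\<lambda>u. s - d * x u - k * x u * v u) (t - \<tau>))) (at t)"
      unfolding X1_def
    proof (rule deriv_conv[OF f1(2,1)])
      show "0 \<le> h1" "(0::real) < 1/2" using h by auto
      show "\<forall>u\<in>{t - h1 - 1/2..t + 1/2}. (x has_real_derivative (\<lambda>u. s - d * x u - k * x u * v u) u) (at u)"
        using dx t hb unfolding t0_def by auto
      show "continuous_on {t - h1 - 1/2..t + 1/2} (\<lambda>u. s - d * x u - k * x u * v u)"
        using cxs cvs t hb unfolding t0_def by (intro continuous_intros) auto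
    qed
    have iX: "(\<lambda>\<tau>. f1 \<tau> * x (t - \<tau>)) integrable_on {0..h1}"
      by (rule conv_int[OF f1(2,1) cxs]) (use tpos hb in auto)
    have iI0: "(\<lambda>\<tau>. f1 \<tau> * (\<lambda>u. x u * v u) (t - \<tau>)) integrable_on {0..h1}"
      by (rule conv_int[OF f1(2,1) cxvs]) (use tpos hb in auto)
    have iI: "(\<lambda>\<tau>. f1 \<tau> * x (t - \<tau>) * v (t - \<tau>)) integrable_on {0..h1}"
      using iI0 by (simp add: mult.assoc)
    have iC: "(\<lambda>\<tau>. f1 \<tau> * s) integrable_on {0..h1}"
      using int_prod[OF f1(2,1), of "\<lambda>_. s"] by simp
    have "integral {0..h1} (\<lambda>\<tau>. f1 \<tau> * (\<lambda>u. s - d * x u - k * x u * v u) (t - \<tau>))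
        = integral {0..h1} (\<lambda>\<tau>. f1 \<tau> * s - d * (f1 \<tau> * x (t - \<tau>)) - k * (f1 \<tau> * x (t - \<tau>) * v (t - \<tau>)))"
      by (rule integral_cong) (simp add: algebra_simps)
    also have "\<dots> = s - d * X1 t - k * I1 t"
    proof -
      have j2: "(\<lambda>\<tau>. d * (f1 \<tau> * x (t - \<tau>))) integrable_on {0..h1}" by (rule integrable_on_mult_right[OF iX])
      have j3: "(\<lambda>\<tau>. k * (f1 \<tau> * x (t - \<tau>) * v (t - \<tau>))) integrable_on {0..h1}" by (rule integrable_on_mult_right[OF iI])
      have "integral {0..h1} (\<lambda>\<tau>. f1 \<tau> * s - d * (f1 \<tau> * x (t - \<tau>)) - k * (f1 \<tau> * x (t - \<tau>) * v (t - \<tau>)))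
         = integral {0..h1} (\<lambda>\<tau>. f1 \<tau> * s - d * (f1 \<tau> * x (t - \<tau>))) - integral {0..h1} (\<lambda>\<tau>. k * (f1 \<tau> * x (t - \<tau>) * v (t - \<tau>)))"
        by (rule integral_diff[OF integrable_diff[OF iC j2] j3])
      also have "\<dots> = integral {0..h1} (\<lambda>\<tau>. f1 \<tau> * s) - integral {0..h1} (\<lambda>\<tau>. d * (f1 \<tau> * x (t - \<tau>))) - integral {0..h1} (\<lambda>\<tau>. k * (f1 \<tau> * x (t - \<tau>) * v (t - \<tau>)))"
        by (simp add: integral_diff[OF iC j2])
      also have "\<dots> = s - d * X1 t - k * I1 t"
        using f1(3) unfolding X1_def I1_def by simp
      finally show ?thesis .
    qed
    finally have D1: "integral {0..h1} (\<lambda>\<tau>. f1 \<tau> * (\<lambda>u. s - d * x u - k * x u * v u) (t - \<tau>))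
        = s - d * X1 t - k * I1 t" .
    have "(W has_real_derivative (kd / k) * (s - d * X1 t - k * I1 t) + (kd * I1 t - \<delta> * y t - p * y t * z t)
        + (p / q) * (q * y t * z t - b * z t)) (at t)"
      unfolding W_def using dX1 D1 dy[OF tpos] dz[OF tpos]
      by (intro DERIV_add DERIV_cmult) auto
    moreover have "(kd / k) * (s - d * X1 t - k * I1 t) + (kd * I1 t - \<delta> * y t - p * y t * z t)
        + (p / q) * (q * y t * z t - b * z t) = W' t"
      unfolding W'_def using pars by (simp add: field_simps)
    ultimately show "(W has_real_derivative W' t) (at t)" by simp
  qed
  have W'le: "\<forall>t\<ge>t0. W' t \<le> kd * s / k - m * W t"
  proof (intro allI impI)
    fix t assume t: "t \<ge> t0"
    have tpos: "t > 0" using t hb unfolding t0_def by simp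
    have a: "(kd / k) * X1 t \<ge> 0" using X1nn[of t] tpos pars by simp
    have b': "(p / q) * z t \<ge> 0" using znn[of t] tpos pars by simp
    have yt: "y t \<ge> 0" using ynn[of t] tpos hb by simp
    have "m * ((kd / k) * X1 t) \<le> d * ((kd / k) * X1 t)" using mult_right_mono[OF m(2) a] .
    moreover have "m * y t \<le> \<delta> * y t" using mult_right_mono[OF m(3) yt] .
    moreover have "m * ((p / q) * z t) \<le> b * ((p / q) * z t)" using mult_right_mono[OF m(4) b'] .
    ultimately show "W' t \<le> kd * s / k - m * W t" unfolding W'_def W_def by (simp add: algebra_simps)
  qed
  define B1 where "B1 = max (W t0) (kd * s / k / m)"
  have WB: "\<forall>t\<ge>t0. W t \<le> B1"
    using ub_comp[OF m(1) dW W'le] unfolding B1_def by simp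
  have yB: "\<And>t. t \<ge> t0 \<Longrightarrow> y t \<le> B1" and zB: "\<And>t. t \<ge> t0 \<Longrightarrow> z t \<le> (q / p) * B1"
  proof -
    fix t assume t: "t \<ge> t0"
    have tpos: "t > 0" using t hb unfolding t0_def by simp
    have a: "(kd / k) * X1 t \<ge> 0" using X1nn[of t] tpos pars by simp
    have b': "(p / q) * z t \<ge> 0" using znn[of t] tpos pars by simp
    have yt: "y t \<ge> 0" using ynn[of t] tpos hb by simp
    have W: "W t \<le> B1" using WB t by simp
    then show "y t \<le> B1" using a b' unfolding W_def by simp
    have "(p / q) * z t \<le> B1" using W a yt unfolding W_def by simp
    then have "(q / p) * ((p / q) * z t) \<le> (q / p) * B1" using pars by (intro mult_left_mono) auto
    then show "z t \<le> (q / p) * B1" using pars by simp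
  qed
  have xB: "\<forall>t\<ge>1. x t \<le> max (x 1) (s / d)"
  proof (rule ub_comp[OF pars(2), where W' = "\<lambda>t. s - d * x t - k * x t * v t"])
    show "\<forall>t\<ge>1. (x has_real_derivative s - d * x t - k * x t * v t) (at t)" using dx by auto
    show "\<forall>t\<ge>1. s - d * x t - k * x t * v t \<le> s - d * x t"
    proof (intro allI impI)
      fix t :: real assume "t \<ge> 1"
      then have "x t \<ge> 0" "v t \<ge> 0" using xnn vnn hb by auto
      then have "k * x t * v t \<ge> 0" using pars by simp
      then show "s - d * x t - k * x t * v t \<le> s - d * x t" by simp
    qed
  qed
  define t2 where "t2 = t0 + h2"
  have vB: "\<forall>t\<ge>t2. v t \<le> max (v t2) (Nd * \<delta> * B1 / \<mu>)"
  proof (rule ub_comp[OF pars(8), where W' = "\<lambda>t. Nd * \<delta> * I2 t - \<mu> * v t"])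
    show "\<forall>t\<ge>t2. (v has_real_derivative Nd * \<delta> * I2 t - \<mu> * v t) (at t)"
      using dv hb h unfolding t2_def t0_def by auto
    show "\<forall>t\<ge>t2. Nd * \<delta> * I2 t - \<mu> * v t \<le> Nd * \<delta> * B1 - \<mu> * v t"
    proof (intro allI impI)
      fix t :: real assume t: "t \<ge> t2"
      have "I2 t \<le> B1" unfolding I2_def
        by (rule conv_le[OF f2(2,1,3) cys]) (use t hb h yB in \<open>auto simp: t2_def t0_def\<close>)
      then show "Nd * \<delta> * I2 t - \<mu> * v t \<le> Nd * \<delta> * B1 - \<mu> * v t"
        using pars by simp
    qed
  qed
  define M where "M = 1 + \<bar>max (x 1) (s / d)\<bar> + \<bar>B1\<bar> + \<bar>(q / p) * B1\<bar> + \<bar>max (v t2) (Nd * \<delta> * B1 / \<mu>)\<bar>"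
  have part3: "\<exists>M>0. \<exists>T. \<forall>t\<ge>T. x t \<le> M \<and> y t \<le> M \<and> v t \<le> M \<and> z t \<le> M"
  proof -
    have Mpos: "M > 0" unfolding M_def by (intro add_pos_nonneg) auto
    have "x t \<le> M \<and> y t \<le> M \<and> v t \<le> M \<and> z t \<le> M" if t: "t \<ge> t2" for t
    proof (intro conjI)
    have t1: "t \<ge> 1" "t \<ge> t0" using t hb h unfolding t2_def t0_def by auto
    have ab: "0 \<le> \<bar>max (x 1) (s / d)\<bar>" "0 \<le> \<bar>B1\<bar>" "0 \<le> \<bar>(q / p) * B1\<bar>" "0 \<le> \<bar>max (v t2) (Nd * \<delta> * B1 / \<mu>)\<bar>"
      by auto
    have "x t \<le> max (x 1) (s / d)" using xB t1 by auto
    then show "x t \<le> M" using abs_ge_self[of "max (x 1) (s / d)"] ab unfolding M_def by linarith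
    have "y t \<le> B1" using yB[OF t1(2)] .
    then show "y t \<le> M" using abs_ge_self[of "B1"] ab unfolding M_def by linarith
    have "v t \<le> max (v t2) (Nd * \<delta> * B1 / \<mu>)" using vB t by auto
    then show "v t \<le> M" using abs_ge_self[of "max (v t2) (Nd * \<delta> * B1 / \<mu>)"] ab unfolding M_def by linarith
    have "z t \<le> (q / p) * B1" using zB[OF t1(2)] .
    then show "z t \<le> M" using abs_ge_self[of "(q / p) * B1"] ab unfolding M_def by linarith
  qed
    then show ?thesis using Mpos by blast
  qed
  show ?thesis using part1 part2 part3 by blast
qed

end
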